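(* Let $\Lambda=\{0,1,3\}\subset\mathbb{Z}$ and let $\mu_\Lambda$ be the probability measure on $\{0,1\}^\Lambda$ giving probability $1/2$ to each of the configurations $(\eta_0,\eta_1,\eta_3)=(1,1,0)$ and $(\eta_0,\eta_1,\eta_3)=(0,0,1)$. Then $\mu_\Lambda$ is LTI, but there is no LTI probability measure on $\{0,1\}^{\{0,1,2,3\}}$ with marginal $\mu_\Lambda$ on $\{0,1\}^\Lambda$; in particular there is no translation invariant probability measure on $\{0,1\}^{\mathbb{Z}}$ with marginal $\mu_\Lambda$.
   Context: A probability measure $\mu_\Lambda$ on $\{0,1\}^\Lambda$, $\Lambda\subset\mathbb{Z}^d$, is LTI if for all subsets $A,A'\subset\Lambda$ with $A'$ a translate of $A$, the marginal on $\{0,1\}^{A'}$ is the translate of the marginal on $\{0,1\}^A$. *)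

theory Defs
  imports "HOL-Probability.Probability"
begin

text \<open>Configurations on a window \<Lambda> \<subseteq> Z are encoded as functions int \<Rightarrow> bool that are False
  outside \<Lambda> (True = 1, False = 0).  A probability measure on {0,1}^\<Lambda> is a pmf supported
  on such configurations.\<close>

definition confs :: "int set \<Rightarrow> (int \<Rightarrow> bool) set" where
  "confs \<Lambda> = {\<eta>. \<forall>i. i \<notin> \<Lambda> \<longrightarrow> \<not> \<eta> i}"

definition measure_on :: "int set \<Rightarrow> (int \<Rightarrow> bool) pmf \<Rightarrow> bool" where
  "measure_on \<Lambda> \<mu> \<longleftrightarrow> set_pmf \<mu> \<subseteq> confs \<Lambda>"

definition restr :: "int set \<Rightarrow> (int \<Rightarrow> bool) \<Rightarrow> (int \<Rightarrow> bool)" where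
  "restr A \<eta> = (\<lambda>i. i \<in> A \<and> \<eta> i)"

definition marg :: "int set \<Rightarrow> (int \<Rightarrow> bool) pmf \<Rightarrow> (int \<Rightarrow> bool) pmf" where
  "marg A \<mu> = map_pmf (restr A) \<mu>"

definition shift :: "int \<Rightarrow> (int \<Rightarrow> bool) \<Rightarrow> (int \<Rightarrow> bool)" where
  "shift k \<eta> = (\<lambda>i. \<eta> (i - k))"

definition LTI :: "int set \<Rightarrow> (int \<Rightarrow> bool) pmf \<Rightarrow> bool" where
  "LTI \<Lambda> \<mu> \<longleftrightarrow> (\<forall>A A' k. A \<subseteq> \<Lambda> \<longrightarrow> A' \<subseteq> \<Lambda> \<longrightarrow> A' = (\<lambda>i. i + k) ` A \<longrightarrow>
      marg A' \<mu> = map_pmf (shift k) (marg A \<mu>))"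

definition muL :: "(int \<Rightarrow> bool) pmf" where
  "muL = pmf_of_set {(\<lambda>i. i = 0 \<or> i = 1), (\<lambda>i. i = 3)}"

definition prodZ :: "(int \<Rightarrow> bool) measure" where
  "prodZ = PiM UNIV (\<lambda>_. count_space UNIV)"

end

theory Submission imports Defs begin

lemma space_prodZ: "space prodZ = UNIV"
  by (simp add: prodZ_def space_PiM)

lemma shift_meas: "shift k \<in> prodZ \<rightarrow>\<^sub>M prodZ"
  unfolding prodZ_def shift_def
  by (rule measurable_PiM_single') (auto simp: space_PiM intro!: measurable_component_singleton)

lemma h_meas: "(\<lambda>\<eta>::int\<Rightarrow>bool. (\<eta> 0, \<eta> 1, \<eta> 3)) \<in> prodZ \<rightarrow>\<^sub>M count_space UNIV"
proof -
  have "(\<lambda>\<eta>::int\<Rightarrow>bool. (\<eta> 0, \<eta> 1, \<eta> 3)) \<in> prodZ \<rightarrow>\<^sub>M (count_space UNIV \<Otimes>\<^sub>M (count_space UNIV \<Otimes>\<^sub>M count_space UNIV))"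
    unfolding prodZ_def by measurable
  moreover have "(count_space UNIV \<Otimes>\<^sub>M (count_space UNIV \<Otimes>\<^sub>M count_space UNIV)) = (count_space (UNIV::(bool\<times>bool\<times>bool) set))"
    by (simp add: pair_measure_countable)
  ultimately show ?thesis by simp
qed

lemma restr_meas: "restr {0,1,3} \<in> prodZ \<rightarrow>\<^sub>M count_space UNIV"
proof -
  have e: "restr {0,1,3} = (\<lambda>(a,b,c). (\<lambda>i::int. (i=0\<and>a) \<or> (i=1 \<and> b) \<or> (i=3\<and>c))) \<circ> (\<lambda>\<eta>::int\<Rightarrow>bool. (\<eta> 0, \<eta> 1, \<eta> 3))"
    by (auto simp: restr_def fun_eq_iff)
  show ?thesis unfolding e
    by (rule measurable_comp[OF h_meas]) simp
qed

definition "f1 = (\<lambda>i::int. i = 0 \<or> i = 1)"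
definition "f2 = (\<lambda>i::int. i = 3)"

lemma muL_eq: "muL = pmf_of_set {f1, f2}" by (simp add: muL_def f1_def f2_def)
lemma f12: "f1 \<noteq> f2" by (auto simp: f1_def f2_def fun_eq_iff)

lemma part4: "\<not> (\<exists>M. prob_space M \<and> sets M = sets prodZ
            \<and> (\<forall>k. distr M M (shift k) = M)
            \<and> distr M (count_space UNIV) (restr {0, 1, 3}) = measure_pmf muL)"
proof
  assume "\<exists>M. prob_space M \<and> sets M = sets prodZ
            \<and> (\<forall>k. distr M M (shift k) = M)
            \<and> distr M (count_space UNIV) (restr {0, 1, 3}) = measure_pmf muL"
  then obtain M where ps: "prob_space M" and sM: "sets M = sets prodZ"
    and inv: "\<And>k. distr M M (shift k) = M"
    and d: "distr M (count_space UNIV) (restr {0, 1, 3}) = measure_pmf muL" by blast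
  have spM: "space M = UNIV" using sets_eq_imp_space_eq[OF sM] space_prodZ by simp
  have rm: "restr {0,1,3} \<in> M \<rightarrow>\<^sub>M count_space UNIV"
    using restr_meas measurable_cong_sets[OF sM refl] by blast
  have sm: "\<And>k. shift k \<in> M \<rightarrow>\<^sub>M M"
    using shift_meas measurable_cong_sets[OF sM sM] by blast
  have em: "\<And>B. emeasure M (restr {0,1,3} -` B) = emeasure (measure_pmf muL) B"
  proof -
    fix B
    have "emeasure (measure_pmf muL) B = emeasure (distr M (count_space UNIV) (restr {0, 1, 3})) B"
      using d by simp
    also have "\<dots> = emeasure M (restr {0,1,3} -` B)"
      using emeasure_distr[OF rm] spM by simp
    finally show "emeasure M (restr {0,1,3} -` B) = emeasure (measure_pmf muL) B" by simp
  qed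
  define E where "E = (\<lambda>j::int. {\<eta>::int\<Rightarrow>bool. \<eta> j \<noteq> \<eta> (j+1)})"
  have E0: "E 0 = restr {0,1,3} -` {\<eta>. \<eta> 0 \<noteq> \<eta> 1}"
    by (auto simp: E_def restr_def)
  have E0s: "E 0 \<in> sets M" unfolding E0 using measurable_sets[OF rm, of "{\<eta>. \<eta> 0 \<noteq> \<eta> 1}"] spM by simp
  have i1: "{f1, f2} \<inter> {\<eta>. \<eta> 0 \<noteq> \<eta> 1} = {}" by (auto simp: f1_def f2_def)
  have E0m: "emeasure M (E 0) = 0" unfolding E0 em muL_eq
  proof -
    have "emeasure (measure_pmf (pmf_of_set {f1, f2})) {\<eta>. \<eta> 0 \<noteq> \<eta> 1} = card ({f1, f2} \<inter> {\<eta>. \<eta> 0 \<noteq> \<eta> 1}) / card {f1,f2}"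
      by (rule emeasure_pmf_of_set) auto
    then show "emeasure (measure_pmf (pmf_of_set {f1, f2})) {\<eta>. \<eta> 0 \<noteq> \<eta> 1} = 0" unfolding i1 by simp
  qed
  have Esh: "\<And>k. shift k -` E 0 = E (-k)"
    by (auto simp: E_def shift_def)
  have Ej: "E (-k) \<in> sets M \<and> emeasure M (E (-k)) = 0" for k
  proof -
    have "E (-k) = shift k -` E 0 \<inter> space M" using Esh spM by simp
    moreover have "emeasure M (E 0) = emeasure (distr M M (shift k)) (E 0)" using inv by simp
    ultimately show ?thesis using emeasure_distr[OF sm E0s] measurable_sets[OF sm E0s] E0m by simp
  qed
  have E1: "E 1 \<in> sets M \<and> emeasure M (E 1) = 0" using Ej[of "-1"] by simp
  have E2: "E 2 \<in> sets M \<and> emeasure M (E 2) = 0" using Ej[of "-2"] by simp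
  have F: "restr {0,1,3} -` {\<eta>. \<eta> 0 \<noteq> \<eta> 3} \<subseteq> E 0 \<union> E 1 \<union> E 2"
    by (auto simp: E_def restr_def)
  have "emeasure M (restr {0,1,3} -` {\<eta>. \<eta> 0 \<noteq> \<eta> 3}) \<le> emeasure M (E 0 \<union> E 1 \<union> E 2)"
    by (rule emeasure_mono[OF F]) (use E0s E1 E2 in auto)
  also have "\<dots> \<le> emeasure M (E 0) + emeasure M (E 1) + emeasure M (E 2)"
  proof -
    have a: "emeasure M (E 0 \<union> E 1 \<union> E 2) \<le> emeasure M (E 0 \<union> E 1) + emeasure M (E 2)"
      by (rule emeasure_subadditive) (use E0s E1 E2 in auto)
    have b: "emeasure M (E 0 \<union> E 1) \<le> emeasure M (E 0) + emeasure M (E 1)"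
      by (rule emeasure_subadditive) (use E0s E1 in auto)
    show ?thesis using a b by (meson add_right_mono order_trans)
  qed
  also have "\<dots> = 0" using E0m E1 E2 by simp
  finally have "emeasure M (restr {0,1,3} -` {\<eta>. \<eta> 0 \<noteq> \<eta> 3}) = 0" by simp
  moreover have "emeasure M (restr {0,1,3} -` {\<eta>. \<eta> 0 \<noteq> \<eta> 3}) = 1"
  proof -
    have i2: "{f1, f2} \<inter> {\<eta>. \<eta> 0 \<noteq> \<eta> 3} = {f1,f2}" by (auto simp: f1_def f2_def)
    show ?thesis unfolding em muL_eq
    proof -
    have "emeasure (measure_pmf (pmf_of_set {f1, f2})) {\<eta>. \<eta> 0 \<noteq> \<eta> 3} = card ({f1, f2} \<inter> {\<eta>. \<eta> 0 \<noteq> \<eta> 3}) / card {f1,f2}"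
      by (rule emeasure_pmf_of_set) auto
    then show "emeasure (measure_pmf (pmf_of_set {f1, f2})) {\<eta>. \<eta> 0 \<noteq> \<eta> 3} = 1" unfolding i2 using f12 
      by (simp add: divide_ennreal_def ennreal_inverse_mult)
    qed
  qed
  ultimately show False by simp
qed

lemma part1: "measure_on {0, 1, 3} muL"
  unfolding measure_on_def muL_eq using f12 by (auto simp: confs_def f1_def f2_def)

lemma set_marg: "set_pmf (marg A \<nu>) = restr A ` set_pmf \<nu>"
  by (simp add: marg_def)


lemma part3: "\<not> (\<exists>\<nu>. measure_on {0..3} \<nu> \<and> LTI {0..3} \<nu> \<and> marg {0, 1, 3} \<nu> = muL)"
proof
  assume "\<exists>\<nu>. measure_on {0..3} \<nu> \<and> LTI {0..3} \<nu> \<and> marg {0, 1, 3} \<nu> = muL"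
  then obtain \<nu> where L: "LTI {0..3} \<nu>" and m: "marg {0, 1, 3} \<nu> = muL" by blast
  have sm: "restr {0,1,3} ` set_pmf \<nu> = {f1, f2}"
    using m set_marg[of "{0,1,3}" \<nu>] by (simp add: muL_eq)
  have e01: "\<eta> 0 = \<eta> 1" if "\<eta> \<in> set_pmf \<nu>" for \<eta>
  proof -
    have "restr {0,1,3} \<eta> \<in> {f1,f2}" using sm that by blast
    then have "restr {0,1,3} \<eta> 0 = restr {0,1,3} \<eta> 1" by (auto simp: f1_def f2_def)
    then show ?thesis by (simp add: restr_def)
  qed
  have sh: "\<eta> k = \<eta> (k+1)" if "\<eta> \<in> set_pmf \<nu>" "k = 1 \<or> k = 2" for \<eta> k
  proof -
    have s1: "{0,1} \<subseteq> {0..(3::int)}" by auto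
    have s2: "{k,k+1} \<subseteq> {0..(3::int)}" using that(2) by auto
    have s3: "{k,k+1} = (\<lambda>i. i + k) ` {0,1}" by (simp add: add.commute)
    have "marg {k, k+1} \<nu> = map_pmf (shift k) (marg {0,1} \<nu>)"
      using L s1 s2 s3 unfolding LTI_def by blast
    then have "set_pmf (marg {k, k+1} \<nu>) = shift k ` restr {0,1} ` set_pmf \<nu>"
      by (simp add: set_marg)
    then have "restr {k,k+1} \<eta> \<in> shift k ` restr {0,1} ` set_pmf \<nu>"
      using that(1) set_marg by blast
    then obtain \<eta>' where h: "\<eta>' \<in> set_pmf \<nu>" "restr {k,k+1} \<eta> = shift k (restr {0,1} \<eta>')" by blast
    have a: "\<eta> k = \<eta>' 0" using fun_cong[OF h(2), of k] by (simp add: restr_def shift_def)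
    have b: "\<eta> (k+1) = \<eta>' 1" using fun_cong[OF h(2), of "k+1"] by (simp add: restr_def shift_def)
    show ?thesis using a b e01[OF h(1)] by simp
  qed
  have "f2 \<in> restr {0,1,3} ` set_pmf \<nu>" using sm by simp
  then obtain \<eta> where h: "\<eta> \<in> set_pmf \<nu>" "f2 = restr {0,1,3} \<eta>" by blast
  have "\<eta> 0 = \<eta> 3" using e01[OF h(1)] sh[OF h(1), of 1] sh[OF h(1), of 2] by simp
  moreover have "\<eta> 0 = False" "\<eta> 3 = True"
    using fun_cong[OF h(2), of 0] fun_cong[OF h(2), of 3] by (simp_all add: f2_def restr_def)
  ultimately show False by simp
qed

lemma marg_single: assumes "a \<in> {0,1,3}"
  shows "marg {a} muL = pmf_of_set {(\<lambda>i. i = a), (\<lambda>_. False)}"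
proof -
  have "restr {a} f1 \<noteq> restr {a} f2"
  proof
    assume "restr {a} f1 = restr {a} f2"
    from fun_cong[OF this, of a] assms show False by (auto simp: restr_def f1_def f2_def)
  qed
  then have inj: "inj_on (restr {a}) {f1,f2}" by (auto simp: inj_on_def)
  have im: "restr {a} ` {f1,f2} = {(\<lambda>i. i = a), (\<lambda>_. False)}"
  proof -
    have "{restr {a} f1, restr {a} f2} = {(\<lambda>i. i = a), (\<lambda>_. False)}"
      using assms by (auto simp: restr_def f1_def f2_def fun_eq_iff)
    then show ?thesis by simp
  qed
  show ?thesis unfolding marg_def muL_eq
    by (subst map_pmf_of_set_inj[OF inj]) (simp, simp, simp only: im)
qed

lemma shift_single: "map_pmf (shift k) (pmf_of_set {(\<lambda>i. i = a), (\<lambda>_. False)}) = pmf_of_set {(\<lambda>i. i = a + k), (\<lambda>_. False)}"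
proof -
  have ne: "(\<lambda>i::int. i = a) \<noteq> (\<lambda>_. False)" by (auto simp: fun_eq_iff)
  have "shift k (\<lambda>i. i = a) \<noteq> shift k (\<lambda>_. False)"
  proof
    assume "shift k (\<lambda>i. i = a) = shift k (\<lambda>_. False)"
    from fun_cong[OF this, of "a+k"] show False by (simp add: shift_def)
  qed
  then have inj: "inj_on (shift k) {(\<lambda>i. i = a), (\<lambda>_. False)}" by (auto simp: inj_on_def)
  have im: "shift k ` {(\<lambda>i. i = a), (\<lambda>_. False)} = {(\<lambda>i. i = a + k), (\<lambda>_. False)}"
  proof -
    have "shift k (\<lambda>i. i = a) = (\<lambda>i. i = a + k)" "shift k (\<lambda>_. False) = (\<lambda>_. False)"
      by (auto simp: shift_def fun_eq_iff algebra_simps)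
    then show ?thesis by simp
  qed
  show ?thesis by (subst map_pmf_of_set_inj[OF inj]) (simp, simp, simp only: im)
qed

lemma marg_empty: "marg {} p = return_pmf (\<lambda>_. False)"
proof -
  have "restr {} = (\<lambda>_ _. False)" by (simp add: restr_def fun_eq_iff)
  then show ?thesis by (simp add: marg_def)
qed

lemma part2: "LTI {0, 1, 3} muL"
  unfolding LTI_def
proof (intro allI impI)
  fix A A' :: "int set" and k :: int
  assume A: "A \<subseteq> {0,1,3}" and A': "A' \<subseteq> {0,1,3}" and eq: "A' = (\<lambda>i. i + k) ` A"
  show "marg A' muL = map_pmf (shift k) (marg A muL)"
  proof (cases "k = 0")
    case True
    then have "shift k = id" "A' = A" using eq by (simp_all add: shift_def fun_eq_iff)
    then show ?thesis by simp
  next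
    case k: False
    show ?thesis
    proof (cases "A = {}")
      case True
      then have "A' = {}" using eq by simp
      then show ?thesis using True by (simp add: marg_empty shift_def)
    next
      case False
      then obtain a where a: "a \<in> A" by blast
      have single: "A = {a}"
      proof (rule ccontr)
        assume "A \<noteq> {a}"
        then obtain b where b: "b \<in> A" "b \<noteq> a" using a by blast
        have "a + k \<in> {0,1,3}" "b + k \<in> {0,1,3}" using a b eq A' by blast+
        moreover have "a \<in> {0,1,3}" "b \<in> {0,1,3}" using a b A by blast+
        ultimately show False using k b(2) by (simp only: insert_iff empty_iff) presburger
      qed
      have "A' = {a + k}" using eq single by simp
      moreover have "a \<in> {0,1,3}" "a + k \<in> {0,1,3}" using a A A' eq by blast+
      ultimately have m1: "marg A' muL = pmf_of_set {(\<lambda>i. i = a + k), (\<lambda>_. False)}"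
        and m2: "marg A muL = pmf_of_set {(\<lambda>i. i = a), (\<lambda>_. False)}"
        using single marg_single[of a] marg_single[of "a+k"] by simp_all
      show ?thesis unfolding m1 m2 shift_single ..
    qed
  qed
qed

theorem mainTheorem11:
  shows "measure_on {0, 1, 3} muL \<and> LTI {0, 1, 3} muL
    \<and> \<not> (\<exists>\<nu>. measure_on {0..3} \<nu> \<and> LTI {0..3} \<nu> \<and> marg {0, 1, 3} \<nu> = muL)
    \<and> \<not> (\<exists>M. prob_space M \<and> sets M = sets prodZ
            \<and> (\<forall>k. distr M M (shift k) = M)
            \<and> distr M (count_space UNIV) (restr {0, 1, 3}) = measure_pmf muL)"
  using part1 part2 part3 part4 by blast

end
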